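(* Let $k\ge4$ be even and let $G$ be a $k$-uniform hypergraph. Then the number of minimal canonical H-eigenvectors of the Laplacian tensor $\mathcal D-\mathcal A$ corresponding to the eigenvalue $0$, counted with $\mathbf x$ and $-\mathbf x$ identified, equals (number of even-bipartite connected components of $G$) $+$ (number of connected components of $G$) $-$ (number of singletons of $G$).
   Context: A $k$-uniform hypergraph $G=(V,E)$ has vertex set $V=[n]$ ($n\ge k$) and nonempty edge set $E$ of $k$-element subsets; $E_i=\{e\in E:i\in e\}$, $d_i=|E_i|$. A singleton is a vertex of degree $0$. Connected components are maximal sets of vertices pairwise joined by chains of edges with consecutive edges intersecting; each singleton is also a connected component. $\mathcal A$: $a_{i_1\dots i_k}=\frac1{(k-1)!}$ if $\{i_1,\dots,i_k\}\in E$, else $0$; $\mathcal D$ diagonal with $d_{i\dots i}=d_i$; so $((\mathcal D-\mathcal A)\mathbf x^{k-1})_i=d_ix_i^{k-1}-\sum_{e\in E_i}\prod_{j\in e\setminus\{i\}}x_j$. A nonzero $\mathbf x\in\mathbb C^n$ is an eigenvector of $\mathcal T$ for $\lambda$ if $(\mathcal T\mathbf x^{k-1})_i=\lambda x_i^{k-1}$ for all $i$; an H-eigenvector is a real eigenvector; it is canonical if $\max_i|x_i|=1$; an eigenvector of eigenvalue $0$ is minimal if no eigenvector of eigenvalue $0$ has support strictly contained in its support. Counting of even-bipartite connected components: each singleton component contributes $1$; each connected component $C$ with $|C|\ge2$ contributes the number of unordered partitions $\{S,T\}$ of $C$ with $S,T\ne\emptyset$ such that $|e\cap S|$ is even for every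 edge $e\subseteq C$. The number of even-bipartite connected components is the sum of these contributions. *)

theory Defs
  imports Complex_Main
begin

definition uniform_hypergraph :: "nat \<Rightarrow> nat \<Rightarrow> nat set set \<Rightarrow> bool" where
  "uniform_hypergraph n k E \<longleftrightarrow> n \<ge> k \<and> E \<noteq> {} \<and>
     (\<forall>e\<in>E. e \<subseteq> {1..n} \<and> card e = k)"

definition edges_at :: "nat set set \<Rightarrow> nat \<Rightarrow> nat set set" where
  "edges_at E i = {e\<in>E. i \<in> e}"

definition hdeg :: "nat set set \<Rightarrow> nat \<Rightarrow> nat" where
  "hdeg E i = card (edges_at E i)"

text \<open>Vectors in C^n are functions nat => complex vanishing outside {1..n}.
  The i-th entry of (D - A) x^(k-1).\<close>
definition lap_apply :: "nat \<Rightarrow> nat set set \<Rightarrow> (nat \<Rightarrow> complex) \<Rightarrow> nat \<Rightarrow> complex" where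
  "lap_apply k E x i = of_nat (hdeg E i) * x i ^ (k - 1)
      - (\<Sum>e\<in>edges_at E i. \<Prod>j\<in>e - {i}. x j)"

definition lap_eigvec :: "nat \<Rightarrow> nat \<Rightarrow> nat set set \<Rightarrow> complex \<Rightarrow> (nat \<Rightarrow> complex) \<Rightarrow> bool" where
  "lap_eigvec n k E lam x \<longleftrightarrow>
     (\<forall>i. i \<notin> {1..n} \<longrightarrow> x i = 0) \<and> (\<exists>i\<in>{1..n}. x i \<noteq> 0) \<and>
     (\<forall>i\<in>{1..n}. lap_apply k E x i = lam * x i ^ (k - 1))"

definition supp_vec :: "(nat \<Rightarrow> complex) \<Rightarrow> nat set" where
  "supp_vec x = {i. x i \<noteq> 0}"

definition is_H_vec :: "(nat \<Rightarrow> complex) \<Rightarrow> bool" where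
  "is_H_vec x \<longleftrightarrow> (\<forall>i. x i \<in> \<real>)"

definition canonical_vec :: "nat \<Rightarrow> (nat \<Rightarrow> complex) \<Rightarrow> bool" where
  "canonical_vec n x \<longleftrightarrow> Max ((\<lambda>i. norm (x i)) ` {1..n}) = 1"

definition minimal_zero_eigvec :: "nat \<Rightarrow> nat \<Rightarrow> nat set set \<Rightarrow> (nat \<Rightarrow> complex) \<Rightarrow> bool" where
  "minimal_zero_eigvec n k E x \<longleftrightarrow> lap_eigvec n k E 0 x \<and>
     \<not> (\<exists>y. lap_eigvec n k E 0 y \<and> supp_vec y \<subset> supp_vec x)"

definition min_can_H0 :: "nat \<Rightarrow> nat \<Rightarrow> nat set set \<Rightarrow> (nat \<Rightarrow> complex) set" where
  "min_can_H0 n k E = {x. minimal_zero_eigvec n k E x \<and> is_H_vec x \<and> canonical_vec n x}"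

definition hadj :: "nat set set \<Rightarrow> nat \<Rightarrow> nat \<Rightarrow> bool" where
  "hadj E i j \<longleftrightarrow> (\<exists>e\<in>E. i \<in> e \<and> j \<in> e)"

definition components :: "nat \<Rightarrow> nat set set \<Rightarrow> nat set set" where
  "components n E = (\<lambda>i. {j\<in>{1..n}. (hadj E)\<^sup>*\<^sup>* i j}) ` {1..n}"

definition singletons :: "nat \<Rightarrow> nat set set \<Rightarrow> nat set" where
  "singletons n E = {i\<in>{1..n}. hdeg E i = 0}"

definition even_partitions :: "nat set set \<Rightarrow> nat set \<Rightarrow> nat set set set" where
  "even_partitions E C = {{S, C - S} | S. S \<subseteq> C \<and> S \<noteq> {} \<and> S \<noteq> C \<and>
      (\<forall>e\<in>E. e \<subseteq> C \<longrightarrow> even (card (e \<inter> S)))}"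

definition comp_contrib :: "nat set set \<Rightarrow> nat set \<Rightarrow> nat" where
  "comp_contrib E C = (if card C = 1 then 1 else card (even_partitions E C))"

definition num_even_bipartite :: "nat \<Rightarrow> nat set set \<Rightarrow> nat" where
  "num_even_bipartite n E = (\<Sum>C\<in>components n E. comp_contrib E C)"

end

theory Submission
  imports Defs
begin

locale hg =
  fixes n k :: nat and E :: "nat set set"
  assumes k4: "k \<ge> 4" and ke: "even k" and U: "uniform_hypergraph n k E"
begin

lemma E_sub: "e \<in> E \<Longrightarrow> e \<subseteq> {1..n}"
  using U by (auto simp: uniform_hypergraph_def)

lemma E_card: "e \<in> E \<Longrightarrow> card e = k"
  using U by (auto simp: uniform_hypergraph_def)

lemma E_fin: "e \<in> E \<Longrightarrow> finite e"
  using E_sub finite_subset by blast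

lemma E_finite: "finite E"
proof -
  have "E \<subseteq> Pow {1..n}" using E_sub by blast
  thus ?thesis by (rule finite_subset) simp
qed

definition comp :: "nat \<Rightarrow> nat set" where
  "comp i = {j\<in>{1..n}. (hadj E)\<^sup>*\<^sup>* i j}"

lemma components_eq: "components n E = comp ` {1..n}"
  by (simp add: components_def comp_def)

lemma rt_sym: "(hadj E)\<^sup>*\<^sup>* i j \<Longrightarrow> (hadj E)\<^sup>*\<^sup>* j i"
proof (induction rule: rtranclp.induct)
  case (rtrancl_refl a) then show ?case by simp
next
  case (rtrancl_into_rtrancl a b c)
  have "hadj E c b" using rtrancl_into_rtrancl(2) by (auto simp: hadj_def)
  then show ?case using rtrancl_into_rtrancl(3) by (meson converse_rtranclp_into_rtranclp)
qed

lemma comp_self: "i \<in> {1..n} \<Longrightarrow> i \<in> comp i"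
  by (simp add: comp_def)

lemma comp_sub: "comp i \<subseteq> {1..n}"
  by (auto simp: comp_def)

lemma comp_fin: "finite (comp i)"
  using comp_sub finite_subset by blast

lemma comp_eq: assumes "j \<in> comp i" shows "comp j = comp i"
proof -
  have ij: "(hadj E)\<^sup>*\<^sup>* i j" using assms by (simp add: comp_def)
  have ji: "(hadj E)\<^sup>*\<^sup>* j i" using rt_sym[OF ij] .
  show ?thesis unfolding comp_def using ij ji
    by (auto intro: rtranclp_trans)
qed

lemma edge_in_comp: assumes "e \<in> E" "j \<in> e" "j \<in> comp i" shows "e \<subseteq> comp i"
proof
  fix l assume l: "l \<in> e"
  have "hadj E j l" using assms l by (auto simp: hadj_def)
  moreover have "(hadj E)\<^sup>*\<^sup>* i j" using assms by (simp add: comp_def)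
  ultimately have "(hadj E)\<^sup>*\<^sup>* i l" by (meson rtranclp.rtrancl_into_rtrancl)
  moreover have "l \<in> {1..n}" using E_sub assms l by blast
  ultimately show "l \<in> comp i" by (simp add: comp_def)
qed

lemma propagate:
  assumes cl: "\<And>j l. j \<in> T \<Longrightarrow> hadj E j l \<Longrightarrow> l \<in> T" and j0: "j0 \<in> T"
    and "(hadj E)\<^sup>*\<^sup>* j0 l"
  shows "l \<in> T"
  using assms(3)
proof (induction rule: rtranclp_induct)
  case base then show ?case using j0 .
next
  case (step y z) then show ?case using cl by blast
qed

lemma prod_eq_max:
  fixes f :: "nat \<Rightarrow> real"
  assumes "finite A" "\<forall>l\<in>A. 0 \<le> f l \<and> f l \<le> m" "prod f A = m ^ card A" "m > 0"
  shows "\<forall>l\<in>A. f l = m"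
proof (rule ccontr)
  assume "\<not> ?thesis"
  then obtain l0 where l0: "l0 \<in> A" "f l0 < m" using assms(2) by force
  have "prod f A = f l0 * prod f (A - {l0})"
    using l0 assms(1) by (simp add: prod.remove)
  also have "prod f (A - {l0}) \<le> (\<Prod>l\<in>A - {l0}. m)"
    by (rule prod_mono) (use assms(2) in auto)
  also have "(\<Prod>l\<in>A - {l0}. m) = m ^ (card A - 1)"
    using l0 assms(1) by simp
  finally have "prod f A \<le> f l0 * m ^ (card A - 1)"
    using assms(2) l0 by (simp add: mult_left_mono)
  also have "\<dots> < m * m ^ (card A - 1)"
    using l0 assms(4) by simp
  also have "\<dots> = m ^ card A"
  proof -
    have "card A \<noteq> 0" using l0 assms(1) by auto
    thus ?thesis by (cases "card A") auto
  qed
  finally show False using assms(3) by simp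
qed

lemma edges_at_fin: "finite (edges_at E j)"
  using E_finite by (simp add: edges_at_def)

lemma eig_eq: "lap_eigvec n k E 0 x \<Longrightarrow> j \<in> {1..n} \<Longrightarrow>
   of_nat (hdeg E j) * x j ^ (k-1) = (\<Sum>e\<in>edges_at E j. \<Prod>l\<in>e-{j}. x l)"
  by (simp add: lap_eigvec_def lap_apply_def)

lemma edge_norm:
  assumes eig: "lap_eigvec n k E 0 x" and j: "j \<in> {1..n}" and m: "m > 0"
    and bnd: "\<forall>e\<in>edges_at E j. \<forall>l\<in>e. norm (x l) \<le> m"
    and xj: "norm (x j) = m" and e: "e \<in> E" "j \<in> e"
  shows "\<forall>l\<in>e. norm (x l) = m"
proof -
  define P where "P = (\<lambda>e. \<Prod>l\<in>e-{j}. norm (x l))"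
  have cd: "card (e' - {j}) = k - 1" if "e' \<in> edges_at E j" for e'
    using that E_card by (simp add: edges_at_def)
  have Ple: "P e' \<le> m^(k-1)" if "e' \<in> edges_at E j" for e'
  proof -
    have "P e' \<le> (\<Prod>l\<in>e'-{j}. m)" unfolding P_def
      by (rule prod_mono) (use bnd that in auto)
    also have "\<dots> = m^(k-1)" using cd[OF that] by simp
    finally show ?thesis .
  qed
  have "of_nat (hdeg E j) * m^(k-1) = norm (of_nat (hdeg E j) * x j ^ (k-1))"
    by (simp add: norm_mult norm_power xj)
  also have "\<dots> = norm (\<Sum>e\<in>edges_at E j. \<Prod>l\<in>e-{j}. x l)"
    using eig_eq[OF eig j] by simp
  also have "\<dots> \<le> (\<Sum>e\<in>edges_at E j. norm (\<Prod>l\<in>e-{j}. x l))"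
    by (rule norm_sum)
  also have "\<dots> = sum P (edges_at E j)" by (simp add: P_def prod_norm)
  finally have ge: "of_nat (hdeg E j) * m^(k-1) \<le> sum P (edges_at E j)" .
  have "sum (\<lambda>e. m^(k-1) - P e) (edges_at E j) = of_nat (hdeg E j) * m^(k-1) - sum P (edges_at E j)"
    by (simp add: sum_subtractf hdeg_def)
  also have "\<dots> \<le> 0" using ge by simp
  finally have "sum (\<lambda>e. m^(k-1) - P e) (edges_at E j) \<le> 0" .
  moreover have "\<forall>e\<in>edges_at E j. 0 \<le> m^(k-1) - P e" using Ple by simp
  ultimately have "sum (\<lambda>e. m^(k-1) - P e) (edges_at E j) = 0"
    by (meson order_antisym sum_nonneg)
  hence "\<forall>e\<in>edges_at E j. m^(k-1) - P e = 0"
    using sum_nonneg_eq_0_iff[OF edges_at_fin] Ple by (simp add: sum_nonneg_eq_0_iff edges_at_fin)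
  moreover have ee: "e \<in> edges_at E j" using e by (simp add: edges_at_def)
  ultimately have "P e = m^(k-1)" by simp
  hence "prod (\<lambda>l. norm (x l)) (e - {j}) = m ^ card (e - {j})"
    using cd[OF ee] by (simp add: P_def)
  moreover have "finite (e - {j})" using E_fin[OF e(1)] by simp
  moreover have "\<forall>l\<in>e-{j}. 0 \<le> norm (x l) \<and> norm (x l) \<le> m" using bnd ee by simp
  ultimately have "\<forall>l\<in>e-{j}. norm (x l) = m"
    using prod_eq_max[of "e - {j}" "\<lambda>l. norm (x l)" m] m by blast
  thus ?thesis using xj by auto
qed

lemma mod_const:
  assumes eig: "lap_eigvec n k E 0 x" and i: "i \<in> {1..n}"
  shows "\<forall>j\<in>comp i. norm (x j) = Max ((\<lambda>j. norm (x j)) ` comp i)"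
proof -
  define m where "m = Max ((\<lambda>j. norm (x j)) ` comp i)"
  have ne: "comp i \<noteq> {}" using comp_self[OF i] by blast
  have le: "norm (x j) \<le> m" if "j \<in> comp i" for j
    unfolding m_def using that comp_fin by simp
  have "m \<in> (\<lambda>j. norm (x j)) ` comp i"
    unfolding m_def using comp_fin ne by (intro Max_in) auto
  then obtain j0 where j0: "j0 \<in> comp i" "norm (x j0) = m" by auto
  show ?thesis
  proof (cases "m = 0")
    case True
    then show ?thesis using le m_def by (metis norm_ge_zero order_antisym)
  next
    case False
    hence mpos: "m > 0" using j0 by (metis norm_ge_zero order_le_less)
    define T where "T = {j\<in>comp i. norm (x j) = m}"
    have cl: "l \<in> T" if jT: "j \<in> T" and hj: "hadj E j l" for j l
    proof -
      obtain e where e: "e \<in> E" "j \<in> e" "l \<in> e" using hj by (auto simp: hadj_def)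
      have jc: "j \<in> comp i" using jT T_def by simp
      have ec: "e \<subseteq> comp i" using edge_in_comp[OF e(1,2) jc] .
      have bnd: "\<forall>e\<in>edges_at E j. \<forall>l\<in>e. norm (x l) \<le> m"
        using edge_in_comp[OF _ _ jc] le by (auto simp: edges_at_def)
      have "\<forall>l\<in>e. norm (x l) = m"
        proof -
        have "j \<in> {1..n}" using comp_sub jc by blast
        moreover have "norm (x j) = m" using jT T_def by simp
        ultimately show ?thesis using edge_norm[OF eig _ mpos bnd _ e(1,2)] by blast
      qed
      thus ?thesis using e ec T_def by auto
    qed
    have "comp j0 = comp i" using comp_eq[OF j0(1)] .
    have "l \<in> T" if "l \<in> comp i" for l
    proof -
      have "(hadj E)\<^sup>*\<^sup>* j0 l" using that \<open>comp j0 = comp i\<close> by (auto simp: comp_def)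
      moreover have "j0 \<in> T" using j0 T_def by simp
      ultimately show ?thesis using propagate[of T j0 l] cl by blast
    qed
    thus ?thesis using T_def m_def by auto
  qed
qed

lemma nz_comp:
  assumes eig: "lap_eigvec n k E 0 x" and i: "i \<in> {1..n}" and xi: "x i \<noteq> 0" and j: "j \<in> comp i"
  shows "x j \<noteq> 0"
proof -
  have "norm (x j) = norm (x i)" using mod_const[OF eig i] j comp_self[OF i] by metis
  thus ?thesis using xi by auto
qed

lemma edge_other: assumes "e \<in> E" shows "\<exists>l\<in>e. l \<noteq> i"
proof (rule ccontr)
  assume "\<not> ?thesis"
  hence "e \<subseteq> {i}" by auto
  hence "card e \<le> card {i}" by (rule card_mono[rotated]) simp
  hence "card e \<le> 1" by simp
  thus False using E_card[OF assms] k4 by simp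
qed

lemma edge_disj: assumes "e \<in> E" "i \<in> e" "i \<notin> comp i0" shows "\<forall>l\<in>e. l \<notin> comp i0"
  using edge_in_comp assms by blast

lemma odd_k1: "odd (k - 1)"
  using ke k4 by simp

lemma restrict_eig:
  assumes eig: "lap_eigvec n k E 0 x" and i0: "i0 \<in> {1..n}" and xi: "x i0 \<noteq> 0"
  shows "lap_eigvec n k E 0 (\<lambda>j. if j \<in> comp i0 then x j else 0)"
proof -
  let ?y = "\<lambda>j. if j \<in> comp i0 then x j else 0"
  have out: "\<forall>i. i \<notin> {1..n} \<longrightarrow> ?y i = 0" using comp_sub by (meson subsetD)
  have nz: "\<exists>i\<in>{1..n}. ?y i \<noteq> 0" using i0 xi comp_self[OF i0] by auto
  have eq: "lap_apply k E ?y i = 0" if i: "i \<in> {1..n}" for i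
  proof (cases "i \<in> comp i0")
    case True
    have "(\<Sum>e\<in>edges_at E i. \<Prod>j\<in>e-{i}. ?y j) = (\<Sum>e\<in>edges_at E i. \<Prod>j\<in>e-{i}. x j)"
    proof (rule sum.cong[OF refl])
      fix e assume "e \<in> edges_at E i"
      hence "e \<subseteq> comp i0" using edge_in_comp True by (auto simp: edges_at_def)
      thus "(\<Prod>j\<in>e-{i}. ?y j) = (\<Prod>j\<in>e-{i}. x j)" by (intro prod.cong) auto
    qed
    hence "lap_apply k E ?y i = lap_apply k E x i" using True by (simp add: lap_apply_def)
    also have "\<dots> = 0" using eig i by (simp add: lap_eigvec_def)
    finally show ?thesis .
  next
    case False
    have "(\<Sum>e\<in>edges_at E i. \<Prod>j\<in>e-{i}. ?y j) = 0"
    proof (rule sum.neutral, rule ballI)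
      fix e assume e: "e \<in> edges_at E i"
      obtain l where l: "l \<in> e" "l \<noteq> i" using edge_other e by (auto simp: edges_at_def)
      have "l \<notin> comp i0" using edge_disj[of e i i0] e False l by (auto simp: edges_at_def)
      thus "(\<Prod>j\<in>e-{i}. ?y j) = 0"
        using l e E_fin by (intro prod_zero) (auto simp: edges_at_def)
    qed
    moreover have "k - 1 > 0" using k4 by simp
    ultimately show ?thesis using False by (simp add: lap_apply_def)
  qed
  show ?thesis using out nz eq by (simp add: lap_eigvec_def)
qed

lemma pm1_real: assumes "x \<in> \<real>" "norm x = 1" shows "x = 1 \<or> x = (-1::complex)"
proof -
  obtain r where r: "x = of_real r" using assms(1) Reals_cases by blast
  hence "\<bar>r\<bar> = 1" using assms(2) by simp
  thus ?thesis using r by (auto simp: abs_if split: if_splits)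
qed

lemma prod_pm1: "finite A \<Longrightarrow> \<forall>l\<in>A. f l = 1 \<or> f l = (-1::complex) \<Longrightarrow> prod f A = 1 \<or> prod f A = -1"
  by (induction A rule: finite_induct) auto

lemma pm1_pow: "(v::complex) = 1 \<or> v = -1 \<Longrightarrow> v ^ (k - 1) = v"
  using odd_k1 by auto

lemma sign_edge:
  assumes eig: "lap_eigvec n k E 0 x" and j: "j \<in> {1..n}"
    and pm: "\<forall>l\<in>comp j. x l = 1 \<or> x l = -1" and e: "e \<in> E" "j \<in> e"
  shows "prod x e = 1"
proof -
  have xj: "x j = 1 \<or> x j = -1" using pm comp_self[OF j] by blast
  have sq: "x j * x j = 1" using xj by auto
  have rem: "prod x e' = x j * prod x (e' - {j})" if "e' \<in> edges_at E j" for e'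
    using that E_fin by (simp add: edges_at_def prod.remove)
  have tpm: "prod x e' = 1 \<or> prod x e' = -1" if "e' \<in> edges_at E j" for e'
  proof -
    have "e' \<subseteq> comp j" using that edge_in_comp comp_self[OF j] by (auto simp: edges_at_def)
    thus ?thesis using prod_pm1[of e' x] pm that E_fin by (auto simp: edges_at_def)
  qed
  have "of_nat (hdeg E j) * x j = (\<Sum>e\<in>edges_at E j. \<Prod>l\<in>e-{j}. x l)"
    using eig_eq[OF eig j] pm1_pow[OF xj] by simp
  hence "x j * (of_nat (hdeg E j) * x j) = (\<Sum>e\<in>edges_at E j. x j * (\<Prod>l\<in>e-{j}. x l))"
    by (simp add: sum_distrib_left)
  moreover have "x j * (of_nat (hdeg E j) * x j) = of_nat (hdeg E j)"
    using sq by (simp add: mult.left_commute)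
  moreover have "(\<Sum>e\<in>edges_at E j. x j * (\<Prod>l\<in>e-{j}. x l)) = (\<Sum>e\<in>edges_at E j. prod x e)"
    using rem by simp
  ultimately have "(\<Sum>e\<in>edges_at E j. prod x e) = of_nat (hdeg E j)"
    by simp
  hence "(\<Sum>e\<in>edges_at E j. Re (prod x e)) = real (hdeg E j)"
    by (metis Re_complex_of_real Re_sum of_real_of_nat_eq)
  hence "(\<Sum>e\<in>edges_at E j. 1 - Re (prod x e)) = 0"
    by (simp add: sum_subtractf hdeg_def)
  moreover have "\<forall>e\<in>edges_at E j. 0 \<le> 1 - Re (prod x e)"
  proof
    fix e assume "e \<in> edges_at E j"
    from tpm[OF this] show "0 \<le> 1 - Re (prod x e)" by (elim disjE) simp_all
  qed
  ultimately have "\<forall>e\<in>edges_at E j. 1 - Re (prod x e) = 0"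
    by (simp add: sum_nonneg_eq_0_iff[OF edges_at_fin])
  moreover have ee: "e \<in> edges_at E j" using e by (simp add: edges_at_def)
  ultimately have "Re (prod x e) = 1" by simp
  thus ?thesis using tpm[OF ee] by auto
qed

definition vec :: "nat set \<Rightarrow> nat set \<Rightarrow> nat \<Rightarrow> complex" where
  "vec C S i = (if i \<in> S then 1 else if i \<in> C then -1 else 0)"

lemma supp_vec_eq: "S \<subseteq> C \<Longrightarrow> supp_vec (vec C S) = C"
  by (auto simp: supp_vec_def vec_def)

lemma prod_vec: assumes "finite e" "e \<subseteq> C" "S \<subseteq> C"
  shows "prod (vec C S) e = (-1) ^ card (e - S)"
proof -
  have "prod (vec C S) e = (\<Prod>i\<in>e. if i \<in> S then 1 else -1)"
    using assms by (intro prod.cong) (auto simp: vec_def)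
  also have "\<dots> = (\<Prod>i\<in>e \<inter> {i. i \<in> S}. 1) * (\<Prod>i\<in>e \<inter> - {i. i \<in> S}. -1)"
    by (rule prod.If_cases[OF assms(1)])
  also have "\<dots> = (-1) ^ card (e - S)"
    by (simp add: Diff_eq)
  finally show ?thesis .
qed

definition good :: "nat set \<Rightarrow> nat set \<Rightarrow> bool" where
  "good C S \<longleftrightarrow> S \<subseteq> C \<and> (\<forall>e\<in>E. e \<subseteq> C \<longrightarrow> even (card (e \<inter> S)))"

lemma vec_in:
  assumes i0: "i0 \<in> {1..n}" and g: "good (comp i0) S"
  shows "vec (comp i0) S \<in> min_can_H0 n k E"
proof -
  let ?C = "comp i0"
  let ?x = "vec ?C S"
  have SC: "S \<subseteq> ?C" using g by (simp add: good_def)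
  have out: "\<forall>i. i \<notin> {1..n} \<longrightarrow> ?x i = 0" using comp_sub[of i0] SC by (auto simp: vec_def)
  have nz: "\<exists>i\<in>{1..n}. ?x i \<noteq> 0" using i0 comp_self[OF i0] by (auto simp: vec_def)
  have pmC: "?x i = 1 \<or> ?x i = -1" if "i \<in> ?C" for i using that by (auto simp: vec_def)
  have eq: "lap_apply k E ?x i = 0" if i: "i \<in> {1..n}" for i
  proof (cases "i \<in> ?C")
    case True
    have "(\<Prod>j\<in>e-{i}. ?x j) = ?x i" if e: "e \<in> edges_at E i" for e
    proof -
      have ec: "e \<subseteq> ?C" using e edge_in_comp True by (auto simp: edges_at_def)
      have fe: "finite e" using e E_fin by (auto simp: edges_at_def)
      have "card e = card (e \<inter> S) + card (e - S)" using card_Int_Diff[OF fe] .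
      moreover have "card e = k" using e E_card by (auto simp: edges_at_def)
      moreover have "even (card (e \<inter> S))" using g ec e by (auto simp: good_def edges_at_def)
      ultimately have "even (card (e - S))" using ke by presburger
      hence p1: "prod ?x e = 1" using prod_vec[OF fe ec SC] by simp
      have "prod ?x e = ?x i * (\<Prod>j\<in>e-{i}. ?x j)"
        using e fe by (simp add: edges_at_def prod.remove)
      hence "?x i * 1 = ?x i * (?x i * (\<Prod>j\<in>e-{i}. ?x j))" using p1 by simp
      also have "\<dots> = (\<Prod>j\<in>e-{i}. ?x j)" using pmC[OF True] by auto
      finally show ?thesis by simp
    qed
    hence "(\<Sum>e\<in>edges_at E i. \<Prod>j\<in>e-{i}. ?x j) = of_nat (hdeg E i) * ?x i"
      by (simp add: hdeg_def)
    then show ?thesis using pm1_pow[OF pmC[OF True]] by (simp add: lap_apply_def)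
  next
    case False
    have x0: "?x i = 0" using False SC by (auto simp: vec_def)
    have "(\<Sum>e\<in>edges_at E i. \<Prod>j\<in>e-{i}. ?x j) = 0"
    proof (rule sum.neutral, rule ballI)
      fix e assume e: "e \<in> edges_at E i"
      obtain l where l: "l \<in> e" "l \<noteq> i" using edge_other e by (auto simp: edges_at_def)
      have "l \<notin> ?C" using edge_disj[of e i i0] e False l by (auto simp: edges_at_def)
      hence "?x l = 0" using SC by (auto simp: vec_def)
      thus "(\<Prod>j\<in>e-{i}. ?x j) = 0"
        using l e E_fin by (intro prod_zero) (auto simp: edges_at_def)
    qed
    moreover have "k - 1 > 0" using k4 by simp
    ultimately show ?thesis using x0 by (simp add: lap_apply_def)
  qed
  have eig: "lap_eigvec n k E 0 ?x" using out nz eq by (simp add: lap_eigvec_def)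
  have minimal: "\<not> (\<exists>y. lap_eigvec n k E 0 y \<and> supp_vec y \<subset> supp_vec ?x)"
  proof
    assume "\<exists>y. lap_eigvec n k E 0 y \<and> supp_vec y \<subset> supp_vec ?x"
    then obtain y where y: "lap_eigvec n k E 0 y" "supp_vec y \<subset> ?C"
      using supp_vec_eq[OF SC] by auto
    obtain i where i: "i \<in> {1..n}" "y i \<noteq> 0" using y(1) by (auto simp: lap_eigvec_def)
    have iC: "i \<in> ?C" using i y(2) by (auto simp: supp_vec_def)
    have "comp i = ?C" using comp_eq[OF iC] .
    hence "?C \<subseteq> supp_vec y" using nz_comp[OF y(1) i] by (auto simp: supp_vec_def)
    thus False using y(2) by blast
  qed
  have H: "is_H_vec ?x" by (simp add: is_H_vec_def vec_def)
  have can: "canonical_vec n ?x"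
    unfolding canonical_vec_def
  proof (rule Max_eqI)
    show "finite ((\<lambda>i. norm (?x i)) ` {1..n})" by simp
    show "y \<le> 1" if "y \<in> (\<lambda>i. norm (?x i)) ` {1..n}" for y using that by (auto simp: vec_def)
    show "1 \<in> (\<lambda>i. norm (?x i)) ` {1..n}"
      using i0 pmC[OF comp_self[OF i0]] by (intro image_eqI[of _ _ i0]) auto
  qed
  show ?thesis using eig minimal H can by (simp add: min_can_H0_def minimal_zero_eigvec_def)
qed

lemma min_char:
  assumes "x \<in> min_can_H0 n k E"
  shows "\<exists>i0\<in>{1..n}. \<exists>S. good (comp i0) S \<and> x = vec (comp i0) S"
proof -
  have eig: "lap_eigvec n k E 0 x" and mn: "\<not> (\<exists>y. lap_eigvec n k E 0 y \<and> supp_vec y \<subset> supp_vec x)"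
    and H: "is_H_vec x" and can: "canonical_vec n x"
    using assms by (auto simp: min_can_H0_def minimal_zero_eigvec_def)
  obtain i0 where i0: "i0 \<in> {1..n}" "x i0 \<noteq> 0" using eig by (auto simp: lap_eigvec_def)
  let ?C = "comp i0"
  let ?y = "\<lambda>j. if j \<in> ?C then x j else 0"
  have ye: "lap_eigvec n k E 0 ?y" using restrict_eig[OF eig i0] .
  have ys: "supp_vec ?y \<subseteq> supp_vec x" by (auto simp: supp_vec_def)
  have eqs: "supp_vec ?y = supp_vec x"
  proof (rule ccontr)
    assume "supp_vec ?y \<noteq> supp_vec x"
    hence "supp_vec ?y \<subset> supp_vec x" using ys by (rule psubsetI[rotated])
    thus False using mn ye by blast
  qed
  have outC: "x j = 0" if "j \<notin> ?C" for j
  proof -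
    have "j \<notin> supp_vec ?y" using that by (simp add: supp_vec_def)
    hence "j \<notin> supp_vec x" using eqs by simp
    thus ?thesis by (simp add: supp_vec_def)
  qed
  define m where "m = Max ((\<lambda>j. norm (x j)) ` ?C)"
  have normC: "norm (x j) = m" if "j \<in> ?C" for j using mod_const[OF eig i0(1)] that m_def by blast
  have mpos: "m > 0" using normC[OF comp_self[OF i0(1)]] i0(2) by auto
  have "Max ((\<lambda>i. norm (x i)) ` {1..n}) = m"
  proof (rule Max_eqI)
    show "finite ((\<lambda>i. norm (x i)) ` {1..n})" by simp
    show "y \<le> m" if "y \<in> (\<lambda>i. norm (x i)) ` {1..n}" for y
      using that normC outC mpos by (auto) (metis norm_zero order_less_le order_refl)
    show "m \<in> (\<lambda>i. norm (x i)) ` {1..n}"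
      using i0 normC[OF comp_self[OF i0(1)]] by (intro image_eqI[of _ _ i0]) auto
  qed
  hence m1: "m = 1" using can by (simp add: canonical_vec_def)
  have pm: "x j = 1 \<or> x j = -1" if "j \<in> ?C" for j
    using pm1_real[of "x j"] H normC[OF that] m1 by (simp add: is_H_vec_def)
  define S where "S = {j\<in>?C. x j = 1}"
  have SC: "S \<subseteq> ?C" by (auto simp: S_def)
  have xv: "x = vec ?C S"
  proof
    fix j show "x j = vec ?C S j"
      using pm outC by (cases "j \<in> ?C") (auto simp: vec_def S_def)
  qed
  have ev: "even (card (e \<inter> S))" if e: "e \<in> E" "e \<subseteq> ?C" for e
  proof -
    obtain j where j: "j \<in> e" using edge_other[OF e(1)] by blast
    have jC: "j \<in> ?C" using j e by blast
    have cj: "comp j = ?C" using comp_eq[OF jC] .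
    have "prod x e = 1"
    proof -
      have "j \<in> {1..n}" using jC comp_sub[of i0] by blast
      moreover have "\<forall>l\<in>comp j. x l = 1 \<or> x l = -1" using pm cj by simp
      ultimately show ?thesis using sign_edge[OF eig _ _ e(1) j] by blast
    qed
    hence "(-1::complex) ^ card (e - S) = 1" using prod_vec[OF E_fin[OF e(1)] e(2) SC] xv by simp
    hence "even (card (e - S))" by (metis neg_one_odd_power one_neq_neg_one)
    moreover have "card e = card (e \<inter> S) + card (e - S)" using card_Int_Diff[OF E_fin[OF e(1)]] .
    moreover have "card e = k" using E_card e by simp
    ultimately show ?thesis using ke by presburger
  qed
  have "good ?C S" using SC ev by (auto simp: good_def)
  thus ?thesis using i0(1) xv by blast
qed

lemma char: "min_can_H0 n k E = (\<Union>C\<in>components n E. vec C ` {S. good C S})"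
proof
  show "min_can_H0 n k E \<subseteq> (\<Union>C\<in>components n E. vec C ` {S. good C S})"
    using min_char components_eq by blast
  show "(\<Union>C\<in>components n E. vec C ` {S. good C S}) \<subseteq> min_can_H0 n k E"
    using vec_in components_eq by auto
qed

lemma neg_vec: "S \<subseteq> C \<Longrightarrow> - vec C S = vec C (C - S)"
  by (auto simp: vec_def fun_eq_iff)

lemma vec_inj: "inj_on (vec C) (Pow C)"
proof (rule inj_onI)
  fix S T assume "S \<in> Pow C" "T \<in> Pow C" "vec C S = vec C T"
  have "\<And>j. vec C S j = 1 \<longleftrightarrow> j \<in> S" "\<And>j. vec C T j = 1 \<longleftrightarrow> j \<in> T"
    by (simp_all add: vec_def)
  note h = this
  show "S = T"
  proof (rule set_eqI)
    fix j
    have "vec C S j = vec C T j" using \<open>vec C S = vec C T\<close> by simp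
    thus "j \<in> S \<longleftrightarrow> j \<in> T" using h[of j] by simp
  qed
qed

lemma supp_neg: "supp_vec (- v) = supp_vec v"
  by (simp add: supp_vec_def)

lemma split_C:
  assumes "C \<in> components n E"
  shows "(\<lambda>S. {S, C-S}) ` {S. good C S} = insert {{}, C} (even_partitions E C)"
proof
  show "(\<lambda>S. {S, C-S}) ` {S. good C S} \<subseteq> insert {{}, C} (even_partitions E C)"
  proof
    fix P assume "P \<in> (\<lambda>S. {S, C-S}) ` {S. good C S}"
    then obtain S where S: "good C S" "P = {S, C - S}" by auto
    show "P \<in> insert {{}, C} (even_partitions E C)"
    proof (cases "S = {} \<or> S = C")
      case True thus ?thesis using S by auto
    next
      case False thus ?thesis using S unfolding even_partitions_def good_def by blast
    qed
  qed
  show "insert {{}, C} (even_partitions E C) \<subseteq> (\<lambda>S. {S, C-S}) ` {S. good C S}"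
  proof
    fix P assume P: "P \<in> insert {{}, C} (even_partitions E C)"
    show "P \<in> (\<lambda>S. {S, C-S}) ` {S. good C S}"
    proof (cases "P = {{}, C}")
      case True
      have "good C {}" by (simp add: good_def)
      thus ?thesis using True by (intro image_eqI[of _ _ "{}"]) auto
    next
      case False
      then obtain S where "P = {S, C - S}" "S \<subseteq> C" "\<forall>e\<in>E. e \<subseteq> C \<longrightarrow> even (card (e \<inter> S))"
        using P unfolding even_partitions_def by auto
      thus ?thesis by (intro image_eqI[of _ _ S]) (auto simp: good_def)
    qed
  qed
qed

lemma ep_notin: "{{}, C} \<notin> even_partitions E C"
proof
  assume "{{}, C} \<in> even_partitions E C"
  then obtain S where S: "{{}, C} = {S, C - S}" "S \<subseteq> C" "S \<noteq> {}" "S \<noteq> C"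
    unfolding even_partitions_def by auto
  have "{} \<in> {S, C - S}" using S(1) by (metis insertI1)
  thus False using S by auto
qed

lemma ep_fin: assumes "finite C" shows "finite (even_partitions E C)"
proof -
  have "even_partitions E C \<subseteq> Pow (Pow C)" unfolding even_partitions_def by auto
  thus ?thesis by (rule finite_subset) (simp add: assms)
qed

lemma ep_one: "card C = 1 \<Longrightarrow> even_partitions E C = {}"
proof -
  assume "card C = 1"
  then obtain a where a: "C = {a}" by (rule card_1_singletonE)
  show ?thesis unfolding even_partitions_def a by (auto simp: subset_singleton_iff)
qed

lemma card_C:
  assumes C: "C \<in> components n E"
  shows "card ((\<lambda>x. {x, - x}) ` vec C ` {S. good C S}) = Suc (card (even_partitions E C))"
proof -
  have "(\<lambda>x. {x, - x}) ` vec C ` {S. good C S} = image (vec C) ` ((\<lambda>S. {S, C-S}) ` {S. good C S})"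
    by (auto simp: image_image good_def neg_vec intro!: image_cong)
  moreover have "inj_on (image (vec C)) ((\<lambda>S. {S, C-S}) ` {S. good C S})"
    by (rule inj_on_subset[OF inj_on_image_Pow[OF vec_inj]]) (auto simp: good_def)
  ultimately have "card ((\<lambda>x. {x, - x}) ` vec C ` {S. good C S}) = card ((\<lambda>S. {S, C-S}) ` {S. good C S})"
    by (simp add: card_image)
  also have "\<dots> = Suc (card (even_partitions E C))"
    using split_C[OF C] ep_notin ep_fin C comp_fin components_eq by auto
  finally show ?thesis .
qed

lemma comp_single: assumes i: "i \<in> {1..n}" "hdeg E i = 0" shows "comp i = {i}"
proof -
  have noe: "\<not> hadj E i j" for j
  proof
    assume "hadj E i j"
    then obtain e where "e \<in> E" "i \<in> e" by (auto simp: hadj_def)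
    hence "edges_at E i \<noteq> {}" by (auto simp: edges_at_def)
    thus False using i edges_at_fin by (simp add: hdeg_def)
  qed
  have "j = i" if "(hadj E)\<^sup>*\<^sup>* i j" for j
    using that by (cases rule: converse_rtranclpE) (auto simp: noe)
  thus ?thesis using i comp_self by (auto simp: comp_def)
qed

lemma singles: "card {C\<in>components n E. card C = 1} = card (singletons n E)"
proof -
  have "(\<lambda>i. {i}) ` singletons n E = {C\<in>components n E. card C = 1}"
  proof
    show "(\<lambda>i. {i}) ` singletons n E \<subseteq> {C\<in>components n E. card C = 1}"
    proof
      fix C assume "C \<in> (\<lambda>i. {i}) ` singletons n E"
      then obtain i where i: "i \<in> {1..n}" "hdeg E i = 0" "C = {i}" by (auto simp: singletons_def)
      have "C = comp i" using comp_single[OF i(1,2)] i(3) by simp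
      hence "C \<in> components n E" using i(1) components_eq by simp
      thus "C \<in> {C\<in>components n E. card C = 1}" using i(3) by simp
    qed
    show "{C\<in>components n E. card C = 1} \<subseteq> (\<lambda>i. {i}) ` singletons n E"
    proof
      fix C assume "C \<in> {C\<in>components n E. card C = 1}"
      then obtain i where i: "i \<in> {1..n}" "C = comp i" "card C = 1" using components_eq by auto
      obtain a where a: "C = {a}" using i(3) by (rule card_1_singletonE)
      have Ci: "C = {i}" using a i(2) comp_self[OF i(1)] by simp
      have "hdeg E i = 0"
      proof (rule ccontr)
        assume "hdeg E i \<noteq> 0"
        hence "edges_at E i \<noteq> {}" by (auto simp: hdeg_def)
        then obtain e where e: "e \<in> E" "i \<in> e" by (auto simp: edges_at_def)
        obtain l where l: "l \<in> e" "l \<noteq> i" using edge_other[OF e(1)] by blast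
        have "l \<in> comp i" using edge_in_comp[OF e comp_self[OF i(1)]] l by blast
        thus False using Ci i l by auto
      qed
      thus "C \<in> (\<lambda>i. {i}) ` singletons n E" using Ci i by (auto simp: singletons_def)
    qed
  qed
  moreover have "inj_on (\<lambda>i. {i}) (singletons n E)" by (auto intro: inj_onI)
  ultimately show ?thesis by (metis card_image)
qed

lemma main: "card ((\<lambda>x. {x, - x}) ` min_can_H0 n k E)
         = num_even_bipartite n E + card (components n E) - card (singletons n E)"
proof -
  let ?f = "\<lambda>x. {x, - x::nat\<Rightarrow>complex}"
  let ?A = "\<lambda>C. ?f ` vec C ` {S. good C S}"
  have finc: "finite (components n E)" using components_eq by simp
  have "?f ` min_can_H0 n k E = (\<Union>C\<in>components n E. ?A C)" by (simp add: char image_UN)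
  hence "card (?f ` min_can_H0 n k E) = (\<Sum>C\<in>components n E. card (?A C))"
  proof (simp only:, intro card_UN_disjoint finc ballI impI)
    fix C assume "C \<in> components n E"
    show "finite (?A C)"
    proof -
      have "{S. good C S} \<subseteq> Pow C" by (auto simp: good_def)
      moreover have "finite C" using \<open>C \<in> components n E\<close> components_eq comp_fin by auto
      ultimately have "finite {S. good C S}" by (metis finite_Pow_iff finite_subset)
      thus ?thesis by simp
    qed
  next
    fix C1 C2 assume C: "C1 \<in> components n E" "C2 \<in> components n E" "C1 \<noteq> C2"
    show "?A C1 \<inter> ?A C2 = {}"
    proof (rule ccontr)
      assume "?A C1 \<inter> ?A C2 \<noteq> {}"
      then obtain S1 S2 where S: "good C1 S1" "good C2 S2"
        "{vec C1 S1, - vec C1 S1} = {vec C2 S2, - vec C2 S2}" by auto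
      hence "vec C1 S1 = vec C2 S2 \<or> vec C1 S1 = - vec C2 S2" by (metis doubleton_eq_iff)
      hence "supp_vec (vec C1 S1) = supp_vec (vec C2 S2)" by (metis supp_neg)
      thus False using S C supp_vec_eq by (simp add: good_def)
    qed
  qed
  also have "\<dots> = (\<Sum>C\<in>components n E. Suc (card (even_partitions E C)))"
    using card_C by simp
  also have "\<dots> = card (components n E) + (\<Sum>C\<in>components n E. card (even_partitions E C))"
    by (simp add: sum_Suc)
  finally have L: "card (?f ` min_can_H0 n k E) = card (components n E) + (\<Sum>C\<in>components n E. card (even_partitions E C))" .
  have "num_even_bipartite n E = (\<Sum>C\<in>components n E. card (even_partitions E C) + (if card C = 1 then 1 else 0))"
    unfolding num_even_bipartite_def comp_contrib_def by (intro sum.cong) (auto simp: ep_one)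
  also have "\<dots> = (\<Sum>C\<in>components n E. card (even_partitions E C)) + card {C\<in>components n E. card C = 1}"
    using finc by (simp add: sum.distrib sum.If_cases Int_def conj_commute)
  finally have R: "num_even_bipartite n E = (\<Sum>C\<in>components n E. card (even_partitions E C)) + card (singletons n E)"
    using singles by simp
  show ?thesis using L R by simp
qed

end

theorem proposition5p2:
  fixes n k :: nat and E :: "nat set set"
  assumes "k \<ge> 4" and "even k" and "uniform_hypergraph n k E"
  shows "card ((\<lambda>x. {x, - x}) ` min_can_H0 n k E)
         = num_even_bipartite n E + card (components n E) - card (singletons n E)"
proof -
  interpret hg n k E using assms by unfold_locales
  show ?thesis by (rule main)
qed

end
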